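(* (Cutfree completeness.) For all finite multisets of formulas $\Gamma,\Delta$: if $\Gamma\models\bigvee\Delta$, then $\vdash_{\mathsf{GT}^-}\Gamma\Rightarrow\Delta$.
   Context: Fix a countably infinite set $\mathsf{Prop}$ of propositional variables. Classical formulas are generated by $\alpha ::= p \mid \bot \mid \neg\alpha \mid \alpha\wedge\alpha \mid \alpha\vee\alpha$ with $p\in\mathsf{Prop}$. Formulas are generated by $\phi ::= \alpha \mid \phi\wedge\phi \mid \phi\vee\phi \mid \phi\mathbin{\backslash\!\!/}\phi$ where $\alpha$ is classical ($\vee$: split disjunction, $\mathbin{\backslash\!\!/}$: inquisitive disjunction). A team with domain $X\subseteq\mathsf{Prop}$ is a set $t\subseteq 2^X$ of valuations. For a team $t$ whose domain contains the variables of the formula: $t\models p$ iff $v(p)=1$ for all $v\in t$; $t\models\bot$ iff $t=\emptyset$; $t\models\neg\alpha$ iff $\{v\}\not\models\alpha$ for all $v\in t$; $t\models\phi\wedge\psi$ iff both hold; $t\models\phi\vee\psi$ iff there are $s,u\subseteq t$ with $t=s\cup u$, $s\models\phi$, $u\models\psi$; $t\models\phi\mathbin{\backslash\!\!/}\psi$ iff $t\models\phi$ or $t\models\psi$. $\Gamma\models\phi$ means every team satisfying all members of the multiset $\Gamma$ satisfies $\phi$. $\bigvee\emptyset:=\bot$. A sequent is $\Gamma\Rightarrow\Delta$ with $\Gamma,\Delta$ finite multisets; "$\Gamma,\Delta$" is multiset union. Deep-inference notation: for a formula $\chi$ with a designated occurrence of a subformula not in the scope of any negation, $\chi\{\eta\}$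 denotes the result of replacing that occurrence by $\eta$. The cut-free calculus $\mathsf{GT}^-$ ($\alpha$ ranges over classical formulas, $\Lambda$ over multisets of classical formulas): axioms $\Gamma,p\Rightarrow p,\Delta$ and $\Gamma,\bot\Rightarrow\Delta$; (L$\neg$) from $\Gamma\Rightarrow\alpha,\Delta$ infer $\Gamma,\neg\alpha\Rightarrow\Delta$; (R$\neg$) from $\Gamma,\alpha\Rightarrow\Delta$ infer $\Gamma\Rightarrow\neg\alpha,\Delta$; (L$\wedge$) from $\Gamma,\phi,\psi\Rightarrow\Delta$ infer $\Gamma,\phi\wedge\psi\Rightarrow\Delta$; (R$\wedge$) from $\Gamma\Rightarrow\phi,\Lambda$ and $\Gamma\Rightarrow\psi,\Lambda$ infer $\Gamma\Rightarrow\phi\wedge\psi,\Lambda,\Delta$; (L$\vee$) from $\Gamma,\phi\Rightarrow\Lambda$ and $\Gamma,\psi\Rightarrow\Lambda$ infer $\Gamma,\phi\vee\psi\Rightarrow\Lambda,\Delta$; (R$\vee$) from $\Gamma\Rightarrow\phi,\psi,\Delta$ infer $\Gamma\Rightarrow\phi\vee\psi,\Delta$; (L$\mathbin{\backslash\!\!/}$) from $\Gamma,\chi\{\phi_L\}\Rightarrow\Delta$ and $\Gamma,\chi\{\phi_R\}\Rightarrow\Delta$ infer $\Gamma,\chi\{\phi_L\mathbin{\backslash\!\!/}\phi_R\}\Rightarrow\Delta$; (R$\mathbin{\backslash\!\!/}$) from $\Gamma\Rightarrow\chi\{\phi_i\},\Delta$ ($i\in\{L,R\}$) infer $\Gamma\Rightarrow\chi\{\phi_L\mathbin{\backslash\!\!/}\phi_R\},\Delta$.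 $\vdash_{\mathsf{GT}^-}$ denotes derivability in $\mathsf{GT}^-$. *)

theory Defs
  imports Main "HOL-Library.Multiset"
begin

text \<open>Propositional variables: the countably infinite set nat.
  IDisj is the inquisitive disjunction, Disj the split (tensor) disjunction.\<close>

datatype fm = Atom nat | Bot | Neg fm | Conj fm fm | Disj fm fm | IDisj fm fm

fun classical :: "fm \<Rightarrow> bool" where
  "classical (Atom p) = True"
| "classical Bot = True"
| "classical (Neg a) = classical a"
| "classical (Conj a b) = (classical a \<and> classical b)"
| "classical (Disj a b) = (classical a \<and> classical b)"
| "classical (IDisj a b) = False"

fun wff :: "fm \<Rightarrow> bool" where
  "wff (Atom p) = True"
| "wff Bot = True"
| "wff (Neg a) = classical a"
| "wff (Conj a b) = (wff a \<and> wff b)"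
| "wff (Disj a b) = (wff a \<and> wff b)"
| "wff (IDisj a b) = (wff a \<and> wff b)"

fun vars :: "fm \<Rightarrow> nat set" where
  "vars (Atom p) = {p}"
| "vars Bot = {}"
| "vars (Neg a) = vars a"
| "vars (Conj a b) = vars a \<union> vars b"
| "vars (Disj a b) = vars a \<union> vars b"
| "vars (IDisj a b) = vars a \<union> vars b"

text \<open>A valuation on domain X is represented as a function nat \<Rightarrow> bool that is
  False outside X; a team with domain X is a set of such functions.\<close>
definition team :: "nat set \<Rightarrow> (nat \<Rightarrow> bool) set \<Rightarrow> bool" where
  "team X t \<longleftrightarrow> (\<forall>v\<in>t. \<forall>p. p \<notin> X \<longrightarrow> v p = False)"

fun sat :: "(nat \<Rightarrow> bool) set \<Rightarrow> fm \<Rightarrow> bool" where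
  "sat t (Atom p) = (\<forall>v\<in>t. v p)"
| "sat t Bot = (t = {})"
| "sat t (Neg a) = (\<forall>v\<in>t. \<not> sat {v} a)"
| "sat t (Conj a b) = (sat t a \<and> sat t b)"
| "sat t (Disj a b) = (\<exists>s u. s \<subseteq> t \<and> u \<subseteq> t \<and> t = s \<union> u \<and> sat s a \<and> sat u b)"
| "sat t (IDisj a b) = (sat t a \<or> sat t b)"

definition entails :: "fm multiset \<Rightarrow> fm \<Rightarrow> bool" where
  "entails \<Gamma> \<phi> \<longleftrightarrow> (\<forall>X t. (\<Union>\<psi>\<in>set_mset \<Gamma>. vars \<psi>) \<union> vars \<phi> \<subseteq> X \<longrightarrow> team X t \<longrightarrow>
       (\<forall>\<psi>\<in>#\<Gamma>. sat t \<psi>) \<longrightarrow> sat t \<phi>)"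

fun bigvee_list :: "fm list \<Rightarrow> fm" where
  "bigvee_list [] = Bot"
| "bigvee_list [a] = a"
| "bigvee_list (a # b # xs) = Disj a (bigvee_list (b # xs))"

text \<open>Split disjunction of a finite multiset (via some enumeration; the choice of order
  is semantically irrelevant). The empty disjunction is Bot.\<close>
definition bigvee :: "fm multiset \<Rightarrow> fm" where
  "bigvee \<Delta> = bigvee_list (SOME xs. mset xs = \<Delta>)"

datatype ctx = Hole
  | CL ctx fm | CR fm ctx
  | DL ctx fm | DR fm ctx
  | IL ctx fm | IR fm ctx

fun fill :: "ctx \<Rightarrow> fm \<Rightarrow> fm" where
  "fill Hole e = e"
| "fill (CL c b) e = Conj (fill c e) b"
| "fill (CR a c) e = Conj a (fill c e)"
| "fill (DL c b) e = Disj (fill c e) b"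
| "fill (DR a c) e = Disj a (fill c e)"
| "fill (IL c b) e = IDisj (fill c e) b"
| "fill (IR a c) e = IDisj a (fill c e)"

inductive GTm :: "fm multiset \<Rightarrow> fm multiset \<Rightarrow> bool" where
  Ax: "GTm (add_mset (Atom p) \<Gamma>) (add_mset (Atom p) \<Delta>)"
| AxBot: "GTm (add_mset Bot \<Gamma>) \<Delta>"
| LNeg: "classical a \<Longrightarrow> GTm \<Gamma> (add_mset a \<Delta>) \<Longrightarrow> GTm (add_mset (Neg a) \<Gamma>) \<Delta>"
| RNeg: "classical a \<Longrightarrow> GTm (add_mset a \<Gamma>) \<Delta> \<Longrightarrow> GTm \<Gamma> (add_mset (Neg a) \<Delta>)"
| LConj: "GTm (add_mset \<phi> (add_mset \<psi> \<Gamma>)) \<Delta> \<Longrightarrow> GTm (add_mset (Conj \<phi> \<psi>) \<Gamma>) \<Delta>"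
| RConj: "\<forall>a\<in>#\<Lambda>. classical a \<Longrightarrow> GTm \<Gamma> (add_mset \<phi> \<Lambda>) \<Longrightarrow> GTm \<Gamma> (add_mset \<psi> \<Lambda>) \<Longrightarrow>
          GTm \<Gamma> (add_mset (Conj \<phi> \<psi>) (\<Lambda> + \<Delta>))"
| LDisj: "\<forall>a\<in>#\<Lambda>. classical a \<Longrightarrow> GTm (add_mset \<phi> \<Gamma>) \<Lambda> \<Longrightarrow> GTm (add_mset \<psi> \<Gamma>) \<Lambda> \<Longrightarrow>
          GTm (add_mset (Disj \<phi> \<psi>) \<Gamma>) (\<Lambda> + \<Delta>)"
| RDisj: "GTm \<Gamma> (add_mset \<phi> (add_mset \<psi> \<Delta>)) \<Longrightarrow> GTm \<Gamma> (add_mset (Disj \<phi> \<psi>) \<Delta>)"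
| LIDisj: "GTm (add_mset (fill c \<phi>L) \<Gamma>) \<Delta> \<Longrightarrow> GTm (add_mset (fill c \<phi>R) \<Gamma>) \<Delta> \<Longrightarrow>
           GTm (add_mset (fill c (IDisj \<phi>L \<phi>R)) \<Gamma>) \<Delta>"
| RIDisjL: "GTm \<Gamma> (add_mset (fill c \<phi>L) \<Delta>) \<Longrightarrow> GTm \<Gamma> (add_mset (fill c (IDisj \<phi>L \<phi>R)) \<Delta>)"
| RIDisjR: "GTm \<Gamma> (add_mset (fill c \<phi>R) \<Delta>) \<Longrightarrow> GTm \<Gamma> (add_mset (fill c (IDisj \<phi>L \<phi>R)) \<Delta>)"

end

theory Submission
  imports Defs
begin

fun csat :: "(nat \<Rightarrow> bool) \<Rightarrow> fm \<Rightarrow> bool" where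
  "csat v (Atom p) = v p"
| "csat v Bot = False"
| "csat v (Neg a) = (\<not> csat v a)"
| "csat v (Conj a b) = (csat v a \<and> csat v b)"
| "csat v (Disj a b) = (csat v a \<or> csat v b)"
| "csat v (IDisj a b) = (csat v a \<or> csat v b)"

lemma flat: "classical a \<Longrightarrow> sat t a = (\<forall>v\<in>t. csat v a)"
proof (induction a arbitrary: t)
  case (Disj a b)
  show ?case
  proof
    assume "sat t (Disj a b)"
    then show "\<forall>v\<in>t. csat v (Disj a b)" using Disj by auto
  next
    assume h: "\<forall>v\<in>t. csat v (Disj a b)"
    let ?s = "{v\<in>t. csat v a}" and ?u = "{v\<in>t. csat v b}"
    have "?s \<subseteq> t \<and> ?u \<subseteq> t \<and> t = ?s \<union> ?u \<and> sat ?s a \<and> sat ?u b"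
      using h Disj by auto
    then show "sat t (Disj a b)" by (simp only: sat.simps) blast
  qed
qed auto

lemma flat1: "classical a \<Longrightarrow> sat {v} a = csat v a"
  using flat by auto

lemma down: "sat t a \<Longrightarrow> s \<subseteq> t \<Longrightarrow> sat s a"
proof (induction a arbitrary: s t)
  case (Disj a b)
  then obtain s1 u1 where "t = s1 \<union> u1" "sat s1 a" "sat u1 b" by auto
  have 1: "sat (s \<inter> s1) a" by (rule Disj.IH(1)[OF \<open>sat s1 a\<close>]) blast
  have 2: "sat (s \<inter> u1) b" by (rule Disj.IH(2)[OF \<open>sat u1 b\<close>]) blast
  have 3: "s = (s \<inter> s1) \<union> (s \<inter> u1)" using Disj.prems(2) \<open>t = s1 \<union> u1\<close> by blast
  show ?case unfolding sat.simps using 1 2 3 by blast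
qed auto

lemma fill_mono: "\<forall>t. sat t a \<longrightarrow> sat t b \<Longrightarrow> sat t (fill c a) \<Longrightarrow> sat t (fill c b)"
proof (induction c arbitrary: t)
  case (DL c x)
  then obtain s u where "s \<subseteq> t" "u \<subseteq> t" "t = s \<union> u" "sat s (fill c a)" "sat u x" by auto
  then show ?case using DL.IH[OF DL.prems(1)] by auto
next
  case (DR x c)
  then obtain s u where "s \<subseteq> t" "u \<subseteq> t" "t = s \<union> u" "sat s x" "sat u (fill c a)" by auto
  then show ?case using DR.IH[OF DR.prems(1)] by auto
qed auto

lemma fill_disj: "sat t (fill c (IDisj L R)) \<Longrightarrow> sat t (fill c L) \<or> sat t (fill c R)"
proof (induction c arbitrary: t)
  case (DL c x)
  then obtain s u where su: "s \<subseteq> t" "u \<subseteq> t" "t = s \<union> u" "sat s (fill c (IDisj L R))" "sat u x"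
    by auto
  from DL.IH[OF su(4)] show ?case
  proof
    assume "sat s (fill c L)" then show ?case using su by auto
  next
    assume "sat s (fill c R)" then show ?case using su by auto
  qed
next
  case (DR x c)
  then obtain s u where su: "s \<subseteq> t" "u \<subseteq> t" "t = s \<union> u" "sat s x" "sat u (fill c (IDisj L R))"
    by auto
  from DR.IH[OF su(5)] show ?case
  proof
    assume "sat u (fill c L)" then show ?case using su by auto
  next
    assume "sat u (fill c R)" then show ?case using su by auto
  qed
qed auto

lemma fill_size: "size a < size b \<Longrightarrow> size (fill c a) < size (fill c b)"
  by (induction c) auto

lemma fill_wff1: "wff (fill c a) \<Longrightarrow> wff a"
  by (induction c) auto

lemma fill_wff2: "wff (fill c a) \<Longrightarrow> wff b \<Longrightarrow> wff (fill c b)"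
  by (induction c) auto

lemma nonclassical: "wff a \<Longrightarrow> \<not> classical a \<Longrightarrow> \<exists>c L R. a = fill c (IDisj L R)"
proof (induction a)
  case (Conj a b)
  show ?case
  proof (cases "classical a")
    case True
    then obtain c L R where "b = fill c (IDisj L R)" using Conj by auto
    then have "Conj a b = fill (CR a c) (IDisj L R)" by simp
    then show ?thesis by blast
  next
    case False
    then obtain c L R where "a = fill c (IDisj L R)" using Conj by auto
    then have "Conj a b = fill (CL c b) (IDisj L R)" by simp
    then show ?thesis by blast
  qed
next
  case (Disj a b)
  show ?case
  proof (cases "classical a")
    case True
    then obtain c L R where "b = fill c (IDisj L R)" using Disj by auto
    then have "Disj a b = fill (DR a c) (IDisj L R)" by simp
    then show ?thesis by blast
  next
    case False
    then obtain c L R where "a = fill c (IDisj L R)" using Disj by auto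
    then have "Disj a b = fill (DL c b) (IDisj L R)" by simp
    then show ?thesis by blast
  qed
next
  case (IDisj a b)
  have "IDisj a b = fill Hole (IDisj a b)" by simp
  then show ?case by blast
qed auto

fun satL :: "(nat \<Rightarrow> bool) set \<Rightarrow> fm list \<Rightarrow> bool" where
  "satL t [] = (t = {})"
| "satL t (a # xs) = (\<exists>s u. t = s \<union> u \<and> sat s a \<and> satL u xs)"

lemma bigvee_satL: "sat t (bigvee_list xs) = satL t xs"
proof (induction xs arbitrary: t rule: bigvee_list.induct)
  case (3 a b xs)
  have "sat t (bigvee_list (a # b # xs)) = (\<exists>s u. s \<subseteq> t \<and> u \<subseteq> t \<and> t = s \<union> u \<and> sat s a \<and> satL u (b # xs))"
    using 3 by simp
  also have "\<dots> = satL t (a # b # xs)" by (simp only: satL.simps) blast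
  finally show ?case .
qed auto

lemma satL_down: "satL t xs \<Longrightarrow> s \<subseteq> t \<Longrightarrow> satL s xs"
proof (induction xs arbitrary: s t)
  case (Cons a xs)
  then obtain s1 u1 where "t = s1 \<union> u1" "sat s1 a" "satL u1 xs" by auto
  have 1: "sat (s \<inter> s1) a" by (rule down[OF \<open>sat s1 a\<close>]) blast
  have 2: "satL (s \<inter> u1) xs" by (rule Cons.IH[OF \<open>satL u1 xs\<close>]) blast
  have 3: "s = (s \<inter> s1) \<union> (s \<inter> u1)" using Cons.prems(2) \<open>t = s1 \<union> u1\<close> by blast
  show ?case unfolding satL.simps using 1 2 3 by blast
qed auto

lemma satL_swap: "satL t (a # b # xs) = satL t (b # a # xs)"
proof -
  have "satL t (a # b # xs) \<Longrightarrow> satL t (b # a # xs)" for a b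
  proof -
    assume "satL t (a # b # xs)"
    then obtain s1 s2 u where "t = s1 \<union> (s2 \<union> u)" "sat s1 a" "sat s2 b" "satL u xs" by auto
    then have "t = s2 \<union> (s1 \<union> u) \<and> sat s2 b \<and> sat s1 a \<and> satL u xs" by blast
    then show ?thesis by (simp only: satL.simps) blast
  qed
  then show ?thesis by blast
qed

lemma satL_remove: "x \<in> set xs \<Longrightarrow> satL t xs = satL t (x # remove1 x xs)"
proof (induction xs arbitrary: t)
  case (Cons y ys)
  show ?case
  proof (cases "x = y")
    case False
    then have "x \<in> set ys" using Cons by auto
    have "satL t (y # ys) = satL t (y # x # remove1 x ys)"
      using Cons.IH[OF \<open>x \<in> set ys\<close>] by simp
    also have "\<dots> = satL t (x # y # remove1 x ys)" by (rule satL_swap)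
    finally show ?thesis using False by simp
  qed simp
qed simp

lemma satL_perm: "mset xs = mset ys \<Longrightarrow> satL t xs = satL t ys"
proof (induction xs arbitrary: ys t)
  case Nil
  then show ?case by simp
next
  case (Cons x xs)
  then have xin: "x \<in> set ys" by (metis list.set_intros(1) set_mset_mset)
  have "mset (remove1 x ys) = mset ys - {#x#}" by (simp add: mset_remove1)
  also have "\<dots> = mset xs" by (simp flip: Cons.prems)
  finally have "mset xs = mset (remove1 x ys)" by simp
  then have "satL u xs = satL u (remove1 x ys)" for u using Cons.IH by blast
  then have "satL t (x # xs) = satL t (x # remove1 x ys)" by simp
  also have "\<dots> = satL t ys" using satL_remove[OF xin] by simp
  finally show ?case .
qed

definition satM :: "(nat \<Rightarrow> bool) set \<Rightarrow> fm multiset \<Rightarrow> bool" where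
  "satM t D = satL t (SOME xs. mset xs = D)"

lemma satM_mset: "satM t (mset xs) = satL t xs"
proof -
  have "mset (SOME ys. mset ys = mset xs) = mset xs" by (rule someI) simp
  then show ?thesis unfolding satM_def using satL_perm by blast
qed

lemma satM_empty: "satM t {#} = (t = {})"
  using satM_mset[of t "[]"] by simp

lemma satM_add: "satM t (add_mset a D) = (\<exists>s u. t = s \<union> u \<and> sat s a \<and> satM u D)"
proof -
  obtain xs where xs: "mset xs = D" using ex_mset by blast
  then have "satM t (add_mset a D) = satL t (a # xs)" using satM_mset[of t "a # xs"] by simp
  then show ?thesis using xs satM_mset by auto
qed

lemma satM_down: "satM t D \<Longrightarrow> s \<subseteq> t \<Longrightarrow> satM s D"
  by (metis ex_mset satL_down satM_mset)

lemma satM_single: "satM {v} D \<Longrightarrow> \<exists>d\<in>#D. sat {v} d"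
proof (induction D)
  case empty
  then show ?case by (simp add: satM_empty)
next
  case (add a D)
  then obtain s u where su: "{v} = s \<union> u" "sat s a" "satM u D" by (auto simp: satM_add)
  show ?case
  proof (cases "v \<in> s")
    case True
    then have "s = {v}" using su by blast
    then show ?thesis using su by auto
  next
    case False
    then have "u = {v}" using su by blast
    then show ?thesis using su add.IH by auto
  qed
qed

definition msz :: "fm multiset \<Rightarrow> fm multiset \<Rightarrow> nat" where
  "msz G D = sum_mset (image_mset size G) + sum_mset (image_mset size D)"

lemma classical_complete:
  "\<forall>a\<in>#G + D. classical a \<Longrightarrow>
   (\<forall>v. (\<forall>g\<in>#G. csat v g) \<longrightarrow> (\<exists>d\<in>#D. csat v d)) \<Longrightarrow> GTm G D"
proof (induction "msz G D" arbitrary: G D rule: less_induct)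
  case less
  note cl = less.prems(1) and cv = less.prems(2)
  show ?case
  proof (cases "\<exists>a. Neg a \<in># G")
    case True
    then obtain a G' where G: "G = add_mset (Neg a) G'" by (metis multi_member_split)
    have "GTm G' (add_mset a D)"
      by (rule less.hyps) (use cl cv G in \<open>auto simp: msz_def\<close>)
    then show ?thesis using G cl LNeg by auto
  next
    case nN: False
    show ?thesis
    proof (cases "\<exists>a. Neg a \<in># D")
      case True
      then obtain a D' where D: "D = add_mset (Neg a) D'" by (metis multi_member_split)
      have "GTm (add_mset a G) D'"
        by (rule less.hyps) (use cl cv D in \<open>auto simp: msz_def\<close>)
      then show ?thesis using D cl RNeg by auto
    next
      case nN2: False
      show ?thesis
      proof (cases "\<exists>a b. Conj a b \<in># G")
        case True
        then obtain a b G' where G: "G = add_mset (Conj a b) G'" by (metis multi_member_split)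
        have "GTm (add_mset a (add_mset b G')) D"
          by (rule less.hyps) (use cl cv G in \<open>auto simp: msz_def\<close>)
        then show ?thesis using G LConj by auto
      next
        case nC: False
        show ?thesis
        proof (cases "\<exists>a b. Conj a b \<in># D")
          case True
          then obtain a b D' where D: "D = add_mset (Conj a b) D'" by (metis multi_member_split)
          have 1: "GTm G (add_mset a D')"
            by (rule less.hyps) (use cl cv D in \<open>auto simp: msz_def\<close>)
          have 2: "GTm G (add_mset b D')"
            by (rule less.hyps) (use cl cv D in \<open>auto simp: msz_def\<close>)
          have "GTm G (add_mset (Conj a b) (D' + {#}))"
            by (rule RConj[OF _ 1 2]) (use cl D in auto)
          then show ?thesis using D by simp
        next
          case nC2: False
          show ?thesis
          proof (cases "\<exists>a b. Disj a b \<in># G")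
            case True
            then obtain a b G' where G: "G = add_mset (Disj a b) G'" by (metis multi_member_split)
            have 1: "GTm (add_mset a G') D"
              by (rule less.hyps) (use cl cv G in \<open>auto simp: msz_def\<close>)
            have 2: "GTm (add_mset b G') D"
              by (rule less.hyps) (use cl cv G in \<open>auto simp: msz_def\<close>)
            have "GTm (add_mset (Disj a b) G') (D + {#})"
              by (rule LDisj[OF _ 1 2]) (use cl in auto)
            then show ?thesis using G by simp
          next
            case nD: False
            show ?thesis
            proof (cases "\<exists>a b. Disj a b \<in># D")
              case True
              then obtain a b D' where D: "D = add_mset (Disj a b) D'" by (metis multi_member_split)
              have "GTm G (add_mset a (add_mset b D'))"
                by (rule less.hyps) (use cl cv D in \<open>auto simp: msz_def\<close>)
              then show ?thesis using D RDisj by auto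
            next
              case nD2: False
              have at: "\<forall>x\<in>#G + D. (\<exists>p. x = Atom p) \<or> x = Bot"
              proof
                fix x assume x: "x \<in># G + D"
                have "classical x" using x cl by blast
                then show "(\<exists>p. x = Atom p) \<or> x = Bot"
                  using x nN nN2 nC nC2 nD nD2 by (cases x) auto
              qed
              show ?thesis
              proof (cases "Bot \<in># G")
                case True
                then obtain G' where "G = add_mset Bot G'" by (metis multi_member_split)
                then show ?thesis using AxBot by simp
              next
                case False
                let ?v = "\<lambda>p. Atom p \<in># G"
                have "\<forall>g\<in>#G. csat ?v g"
                proof
                  fix g assume g: "g \<in># G"
                  then show "csat ?v g" using at False by (cases g) auto
                qed
                then obtain d where d: "d \<in># D" "csat ?v d" using cv by blast
                then obtain p where p: "d = Atom p" "Atom p \<in># G"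
                  using at by (cases d) auto
                obtain G' where G: "G = add_mset (Atom p) G'" using p by (metis multi_member_split)
                obtain D' where D: "D = add_mset (Atom p) D'" using d p by (metis multi_member_split)
                show ?thesis using G D Ax by simp
              qed
            qed
          qed
        qed
      qed
    qed
  qed
qed

lemma main:
  "\<forall>a\<in>#G + D. wff a \<Longrightarrow>
   (\<forall>t. (\<forall>g\<in>#G. sat t g) \<longrightarrow> satM t D) \<Longrightarrow> GTm G D"
proof (induction "msz G D" arbitrary: G D rule: less_induct)
  case less
  note wf = less.prems(1) and val = less.prems(2)
  show ?case
  proof (cases "\<exists>g\<in>#G. \<not> classical g")
    case True
    then obtain g G' where G: "G = add_mset g G'" and g: "\<not> classical g"
      by (metis multi_member_split)
    then obtain c L R where gf: "g = fill c (IDisj L R)" using nonclassical[of g] wf G g by auto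
    have wg: "wff (fill c (IDisj L R))" using wf G gf by auto
    have "GTm (add_mset (fill c L) G') D"
    proof (rule less.hyps)
      show "msz (add_mset (fill c L) G') D < msz G D"
        using G gf fill_size[of L "IDisj L R" c] by (simp add: msz_def)
      show "\<forall>a\<in>#add_mset (fill c L) G' + D. wff a"
        using wf G wg fill_wff1[OF wg] fill_wff2[OF wg] by auto
      show "\<forall>t. (\<forall>g\<in>#add_mset (fill c L) G'. sat t g) \<longrightarrow> satM t D"
        using val G gf fill_mono[of L "IDisj L R"] by auto
    qed
    moreover have "GTm (add_mset (fill c R) G') D"
    proof (rule less.hyps)
      show "msz (add_mset (fill c R) G') D < msz G D"
        using G gf fill_size[of R "IDisj L R" c] by (simp add: msz_def)
      show "\<forall>a\<in>#add_mset (fill c R) G' + D. wff a"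
        using wf G wg fill_wff1[OF wg] fill_wff2[OF wg] by auto
      show "\<forall>t. (\<forall>g\<in>#add_mset (fill c R) G'. sat t g) \<longrightarrow> satM t D"
        using val G gf fill_mono[of R "IDisj L R"] by auto
    qed
    ultimately show ?thesis using G gf LIDisj by simp
  next
    case clG: False
    show ?thesis
    proof (cases "\<exists>d\<in>#D. \<not> classical d")
      case True
      then obtain d D' where D: "D = add_mset d D'" and d: "\<not> classical d"
        by (metis multi_member_split)
      then obtain c L R where df: "d = fill c (IDisj L R)" using nonclassical[of d] wf D d by auto
      have wd: "wff (fill c (IDisj L R))" using wf D df by auto
      define T where "T = {v. \<forall>g\<in>#G. csat v g}"
      have "\<forall>g\<in>#G. sat T g" using clG flat T_def by auto
      then have "satM T D" using val by blast
      then obtain s u where su: "T = s \<union> u" "sat s d" "satM u D'" using D by (auto simp: satM_add)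
      have sub: "t \<subseteq> T" if "\<forall>g\<in>#G. sat t g" for t
        using that clG flat T_def by auto
      have valX: "\<forall>t. (\<forall>g\<in>#G. sat t g) \<longrightarrow> satM t (add_mset (fill c X) D')"
        if sX: "sat s (fill c X)" for X
      proof (intro allI impI)
        fix t assume t: "\<forall>g\<in>#G. sat t g"
        have "t = (s \<inter> t) \<union> (u \<inter> t)" using sub[OF t] su by blast
        moreover have "sat (s \<inter> t) (fill c X)" using down[OF sX] by blast
        moreover have "satM (u \<inter> t) D'" using satM_down[OF su(3)] by blast
        ultimately show "satM t (add_mset (fill c X) D')" by (auto simp: satM_add)
      qed
      have wfX: "\<forall>a\<in>#G + add_mset (fill c X) D'. wff a" if "wff X" for X
        using wf D wd fill_wff2[OF wd that] by auto
      have wL: "wff L" and wR: "wff R" using fill_wff1[OF wd] by auto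
      from fill_disj[OF su(2)[unfolded df]]
      show ?thesis
      proof
        assume "sat s (fill c L)"
        have "GTm G (add_mset (fill c L) D')"
          by (rule less.hyps[OF _ wfX[OF wL] valX[OF \<open>sat s (fill c L)\<close>]])
             (use D df fill_size[of L "IDisj L R" c] in \<open>simp add: msz_def\<close>)
        then show ?thesis using D df RIDisjL by simp
      next
        assume "sat s (fill c R)"
        have "GTm G (add_mset (fill c R) D')"
          by (rule less.hyps[OF _ wfX[OF wR] valX[OF \<open>sat s (fill c R)\<close>]])
             (use D df fill_size[of R "IDisj L R" c] in \<open>simp add: msz_def\<close>)
        then show ?thesis using D df RIDisjR by simp
      qed
    next
      case False
      show ?thesis
      proof (rule classical_complete)
        show "\<forall>a\<in>#G + D. classical a" using False clG by auto
        show "\<forall>v. (\<forall>g\<in>#G. csat v g) \<longrightarrow> (\<exists>d\<in>#D. csat v d)"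
        proof (intro allI impI)
          fix v assume "\<forall>g\<in>#G. csat v g"
          then have "\<forall>g\<in>#G. sat {v} g" using clG flat1 by auto
          then have "satM {v} D" using val by blast
          then obtain d where "d \<in># D" "sat {v} d" using satM_single by blast
          then show "\<exists>d\<in>#D. csat v d" using False flat1 by auto
        qed
      qed
    qed
  qed
qed

theorem theorem6p9:
  fixes \<Gamma> \<Delta> :: "fm multiset"
  assumes "\<forall>\<phi>\<in>#\<Gamma> + \<Delta>. wff \<phi>"
    and "entails \<Gamma> (bigvee \<Delta>)"
  shows "GTm \<Gamma> \<Delta>"
proof (rule main[OF assms(1)], intro allI impI)
  fix t assume h: "\<forall>g\<in>#\<Gamma>. sat t g"
  have "team UNIV t" by (simp add: team_def)
  then have "sat t (bigvee \<Delta>)" using assms(2) h unfolding entails_def by blast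
  then show "satM t \<Delta>" by (simp add: bigvee_def satM_def bigvee_satL)
qed

end
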